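(* Let $n\ge 2$. To each line of play of Planted Brussels Sprouts of order $n$ associate a sequence $(a_1,\dots,a_{n-1})$ as follows. Suppose the $k$-th move joins free arms with short labels $i$ and $j$ lying in a common region. In that region, just before the move, let $i^-$ and $j^-$ be the short labels of the free arms immediately counterclockwise from the arm $i$ and from the arm $j$, respectively. Set $a_k=\min(i^-,j^-)$. Then distinct lines of play give distinct sequences. Moreover, the set of sequences obtained is exactly the set of parking functions of length $n-1$.
   Context: Planted Brussels Sprouts of order $n$: start with a closed disk with $n$ marked points on its boundary circle, labeled $1,\dots,n$ in clockwise order. Attached to each marked point is an arm, a short segment pointing into the interior of the disk; these arms are free. A move consists of two steps. First, choose two free arms and join their free ends by a simple curve (an arc) in the disk that does not intersect any previously drawn arc or arm; the two joined arms cease to be free. Second, mark a point (a notch) on the arc, from which two new free arms emanate, one on each side of the arc. The game ends when no move is possible. A line of play is the full sequence of moves. Two lines of play are the same iff for each $k$ the arms joined at the $k$-th move coincide. Arms are identified by long labels: the original arm $i$ has long label $i$, and when arms with long labels $\alpha,\beta$ are joined, the new arms have long labels $(\alpha,\beta)$ and $(\beta,\alpha)$. Short labels: the original arm at point $i$ has short label $i$. If an arc joins arms with short labels $i$ and $j$, the two new arms receive short labels $i$ and $j$, placed so that, going clockwise around the notch, one sees the old arm $i$, the new arm $i$, the old arm $j$, and the new arm $j$. Regions and subgames: at any stage, the drawn arcs divide the disk into regions. The free arms in a region form a subgame, and any move joins two free arms of the same region. Within a region, the free arms carry distinct short labels and have a cyclic (clockwise) order around the region. "Immediately counterclockwise"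 refers to the preceding free arm in this cyclic order. A parking function of length $n-1$ is a sequence $(a_1,\dots,a_{n-1})$ of integers in $\{1,\dots,n-1\}$ such that, if it is rearranged in weakly increasing order $a'_1\le\cdots\le a'_{n-1}$, then $a'_i\le i$ for all $i$. *)

theory Defs
  imports Main
begin

text \<open>Arms are identified by their long labels: an original arm has long label i,
  joining arms alpha, beta creates the arms (alpha,beta) and (beta,alpha).\<close>
datatype arm = Orig nat | New arm arm

fun short :: "arm \<Rightarrow> nat" where
  "short (Orig i) = i"
| "short (New a b) = short a"

text \<open>A position is a list of regions; each region is the list of its free arms
  in clockwise cyclic order (up to rotation).  Joining arms alpha and beta of a region
  whose clockwise order is alpha, xs, beta, ys splits it into the region with clockwise
  order xs, (alpha,beta) and the region with clockwise order ys, (beta,alpha).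
  The arm immediately counterclockwise from alpha is last (beta # ys), and the arm
  immediately counterclockwise from beta is last (alpha # xs).
  play S ms as: from position S, the full line of play ms (k-th entry = the set of
  the two arms joined at move k) is played until no move is possible, and as is
  the associated sequence a_k = min(i^-, j^-).\<close>
inductive play :: "arm list list \<Rightarrow> arm set list \<Rightarrow> nat list \<Rightarrow> bool" where
  stop: "(\<forall>R\<in>set S. length R \<le> 1) \<Longrightarrow> play S [] []"
| step: "\<lbrakk> S = S1 @ R # S2; rotate k R = \<alpha> # xs @ \<beta> # ys; \<alpha> \<noteq> \<beta>;
           play (S1 @ (xs @ [New \<alpha> \<beta>]) # (ys @ [New \<beta> \<alpha>]) # S2) ms as \<rbrakk>
         \<Longrightarrow> play S ({\<alpha>, \<beta>} # ms)
               (min (short (last (\<beta> # ys))) (short (last (\<alpha> # xs))) # as)"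

definition init_pos :: "nat \<Rightarrow> arm list list" where
  "init_pos n = [map Orig [1..<n+1]]"

definition parking_function :: "nat \<Rightarrow> nat list \<Rightarrow> bool" where
  "parking_function m a \<longleftrightarrow> length a = m \<and> set a \<subseteq> {1..m} \<and>
     (\<forall>i<m. sort a ! i \<le> i + 1)"

end

theory Submission
  imports Defs "HOL-Library.Multiset"
begin


definition cle :: "nat multiset \<Rightarrow> nat \<Rightarrow> nat" where
  "cle M x = size {#z \<in># M. z \<le> x#}"

definition rk :: "nat set \<Rightarrow> nat \<Rightarrow> nat" where
  "rk C x = card {z\<in>C. z \<le> x}"

definition pk :: "nat set \<Rightarrow> nat multiset \<Rightarrow> bool" where
  "pk C M \<longleftrightarrow> finite C \<and> C \<noteq> {} \<and> size M + 1 = card C \<and> set_mset M \<subseteq> C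
     \<and> (\<forall>x<Max C. rk C x \<le> cle M x)"

lemma cle_split:
  "cle M x = cle {#z \<in># M. P z#} x + cle {#z \<in># M. \<not> P z#} x"
proof -
  have "{#z \<in># M. z \<le> x#} = {#z \<in># {#z \<in># M. P z#}. z \<le> x#} + {#z \<in># {#z \<in># M. \<not> P z#}. z \<le> x#}"
    by (induction M) auto
  then show ?thesis unfolding cle_def by (metis size_union)
qed

lemma rk_split:
  assumes "finite C"
  shows "rk C x = rk {z\<in>C. P z} x + rk {z\<in>C. \<not> P z} x"
  unfolding rk_def
proof -
  have "{z\<in>C. z \<le> x} = {z\<in>{z\<in>C. P z}. z \<le> x} \<union> {z\<in>{z\<in>C. \<not> P z}. z \<le> x}" by auto
  moreover have "card ({z\<in>{z\<in>C. P z}. z \<le> x} \<union> {z\<in>{z\<in>C. \<not> P z}. z \<le> x}) =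
     card {z\<in>{z\<in>C. P z}. z \<le> x} + card {z\<in>{z\<in>C. \<not> P z}. z \<le> x}"
    by (rule card_Un_disjoint) (use assms in auto)
  ultimately show "card {z\<in>C. z \<le> x} = card {z\<in>{z\<in>C. P z}. z \<le> x} + card {z\<in>{z\<in>C. \<not> P z}. z \<le> x}" by simp
qed

lemma filter_all: "(\<forall>x\<in>#M. P x) \<Longrightarrow> filter_mset P M = M"
  by (induction M) auto

lemma rk_full:
  assumes "finite C" "Max C \<le> x" shows "rk C x = card C"
proof -
  have "\<forall>z\<in>C. z \<le> Max C" using assms(1) by simp
  then have "\<forall>z\<in>C. z \<le> x" using assms(2) le_trans by blast
  then have "{z\<in>C. z \<le> x} = C" by blast
  then show ?thesis unfolding rk_def by simp
qed

lemma cle_full: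
  assumes "set_mset M \<subseteq> C" "finite C" "Max C \<le> x" shows "cle M x = size M"
proof -
  have "\<forall>z\<in>C. z \<le> Max C" using assms(2) by simp
  then have "\<forall>z\<in>#M. z \<le> x" using assms(1,3) le_trans by blast
  then have "{#z \<in># M. z \<le> x#} = M" by (rule filter_all)
  then show ?thesis unfolding cle_def by simp
qed

lemma rk_le_pk:
  assumes "pk C M"
  shows "rk C x \<le> cle M x + 1"
proof (cases "x < Max C")
  case True then show ?thesis using assms unfolding pk_def by fastforce
next
  case False
  then show ?thesis using assms rk_full cle_full unfolding pk_def by (metis add.commute le_refl not_le)
qed

lemma card_split:
  assumes "finite C"
  shows "card C = card {z\<in>C. P z} + card {z\<in>C. \<not> P z}"
proof -
  have "C = {z\<in>C. P z} \<union> {z\<in>C. \<not> P z}" by auto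
  moreover have "card ({z\<in>C. P z} \<union> {z\<in>C. \<not> P z}) = card {z\<in>C. P z} + card {z\<in>C. \<not> P z}"
    by (rule card_Un_disjoint) (use assms in auto)
  ultimately show ?thesis by simp
qed

lemma size_split: "size M = size {#z \<in># M. P z#} + size {#z \<in># M. \<not> P z#}"
  by (metis multiset_partition size_union)

lemma pk_lt_Max:
  assumes "pk C M" "z \<in># M"
  shows "z < Max C"
proof -
  have fin: "finite C" and sz: "size M + 1 = card C" and sub: "set_mset M \<subseteq> C"
    and pre: "\<forall>x<Max C. rk C x \<le> cle M x" using assms(1) unfolding pk_def by auto
  have zC: "z \<in> C" using assms(2) sub by auto
  have zle: "z \<le> Max C" using fin zC by simp
  show ?thesis
  proof (rule ccontr)
    assume "\<not> z < Max C"
    then have zM: "z = Max C" using zle by simp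
    have "M \<noteq> {#}" using assms(2) by auto
    then have "size M > 0" by (simp add: nonempty_has_size)
    then have "card C \<ge> 2" using sz by simp
    show False
    proof (cases "Max C = 0")
      case True
      have "\<forall>y\<in>C. y \<le> Max C" using fin by simp
      then have "C \<subseteq> {0}" using True by auto
      then have "card C \<le> 1" using card_mono[of "{0}" C] by auto
      then show False using \<open>card C \<ge> 2\<close> by simp
    next
      case False
      define x where "x = Max C - 1"
      have xl: "x < Max C" using False x_def by simp
      have allle: "\<forall>y\<in>C. y \<le> Max C" using fin by simp
      have "{z\<in>C. z \<le> x} = C - {Max C}"
      proof (intro set_eqI iffI)
        fix y assume "y \<in> {z\<in>C. z \<le> x}" then show "y \<in> C - {Max C}" using xl by auto
      next
        fix y assume y: "y \<in> C - {Max C}"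
        then have "y < Max C" using allle by (metis DiffD1 DiffD2 insertI1 le_neq_implies_less)
        then show "y \<in> {z\<in>C. z \<le> x}" using y x_def by auto
      qed
      moreover have "Max C \<in> C" using fin \<open>card C \<ge> 2\<close> by (intro Max_in) auto
      ultimately have "rk C x = card C - 1" unfolding rk_def using fin by simp
      moreover have "cle M x < size M"
      proof -
        have "{#y \<in># M. y \<le> x#} \<subset># M"
        proof (rule subset_mset.le_neq_trans)
          show "{#y \<in># M. y \<le> x#} \<subseteq># M" by (rule multiset_filter_subset)
          show "{#y \<in># M. y \<le> x#} \<noteq> M"
          proof
            assume h: "{#y \<in># M. y \<le> x#} = M"
            have "z \<in># {#y \<in># M. y \<le> x#}" by (simp only: h assms(2))
            then have "z \<le> x" by simp
            then show False using zM xl by linarith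
          qed
        qed
        then show ?thesis unfolding cle_def by (rule mset_subset_size)
      qed
      moreover have "rk C x \<le> cle M x" using pre xl by blast
      ultimately show False using sz by linarith
    qed
  qed
qed

lemma sound_core:
  fixes C :: "nat set"
  assumes fin: "finite C" and pC: "p\<in>C" and qC: "q\<in>C" and pq: "p<q"
    and NC: "set_mset N \<subseteq> C"
    and pA: "pk {z\<in>C. p<z \<and> z\<le>q} {#z\<in>#N. p<z \<and> z\<le>q#}"
    and pB: "pk {z\<in>C. \<not>(p<z \<and> z\<le>q)} {#z\<in>#N. \<not>(p<z \<and> z\<le>q)#}"
  shows "pk C (add_mset p N)"
proof -
  define A where "A = {z\<in>C. p<z \<and> z\<le>q}"
  define B where "B = {z\<in>C. \<not>(p<z \<and> z\<le>q)}"
  define NA where "NA = {#z\<in>#N. p<z \<and> z\<le>q#}"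
  define NB where "NB = {#z\<in>#N. \<not>(p<z \<and> z\<le>q)#}"
  have pA': "pk A NA" and pB': "pk B NB" using pA pB A_def B_def NA_def NB_def by simp_all
  have cC: "card C = card A + card B" unfolding A_def B_def by (rule card_split[OF fin])
  have sN: "size N = size NA + size NB" unfolding NA_def NB_def by (rule size_split)
  have finA: "finite A" "finite B" using fin A_def B_def by auto
  have qA: "q \<in> A" using qC pq A_def by auto
  have pB2: "p \<in> B" using pC B_def by auto
  have MaxA: "Max A = q" using qA finA A_def by (intro Max_eqI) auto
  have MaxB: "p \<le> Max B" using pB2 finA by simp
  have szA: "size NA + 1 = card A" and szB: "size NB + 1 = card B" using pA' pB' unfolding pk_def by auto
  have preA: "\<forall>x<Max A. rk A x \<le> cle NA x" using pA' unfolding pk_def by blast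
  have preB: "\<forall>x<Max B. rk B x \<le> cle NB x" using pB' unfolding pk_def by blast
  have "\<forall>x<Max C. rk C x \<le> cle (add_mset p N) x"
  proof (intro allI impI)
    fix x assume xl: "x < Max C"
    have r: "rk C x = rk A x + rk B x" unfolding A_def B_def by (rule rk_split[OF fin])
    have c1: "cle (add_mset p N) x = (if p \<le> x then 1 else 0) + cle N x" unfolding cle_def by simp
    have c2: "cle N x = cle NA x + cle NB x" unfolding NA_def NB_def by (rule cle_split)
    have c: "cle (add_mset p N) x = (if p \<le> x then 1 else 0) + cle NA x + cle NB x" using c1 c2 by simp
    have ra: "rk A x \<le> cle NA x + (if q \<le> x then 1 else 0)"
    proof (cases "q \<le> x")
      case True then show ?thesis using rk_le_pk[OF pA'] by simp
    next
      case False then show ?thesis using preA MaxA by simp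
    qed
    have rb: "rk B x \<le> cle NB x + (if Max B \<le> x then 1 else 0)"
    proof (cases "Max B \<le> x")
      case True then show ?thesis using rk_le_pk[OF pB'] by simp
    next
      case False then show ?thesis using preB by simp
    qed
    have notboth: "\<not> (q \<le> x \<and> Max B \<le> x)"
    proof
      assume h: "q \<le> x \<and> Max B \<le> x"
      have "Max C \<in> C" using fin pC Max_in by blast
      then have "Max C \<in> A \<or> Max C \<in> B" using A_def B_def by auto
      then have "Max C \<le> x"
        using h MaxA finA by (metis Max_ge order_trans)
      then show False using xl by simp
    qed
    show "rk C x \<le> cle (add_mset p N) x"
    proof (cases "q \<le> x")
      case True
      then show ?thesis using r c ra rb notboth pq by auto
    next
      case False
      then show ?thesis using r c ra rb notboth pq MaxB by (cases "Max B \<le> x") auto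
    qed
  qed
  moreover have "size (add_mset p N) + 1 = card C" using cC sN szA szB by simp
  moreover have "set_mset (add_mset p N) \<subseteq> C" using pC NC by auto
  ultimately show ?thesis unfolding pk_def using fin pC by auto
qed

lemma uniq_core:
  fixes C :: "nat set"
  assumes fin: "finite C" and qC: "q\<in>C" and q'C: "q'\<in>C" and pq: "p<q" and pq': "p<q'"
    and pA: "pk {z\<in>C. p<z \<and> z\<le>q} {#z\<in>#N. p<z \<and> z\<le>q#}"
    and pA': "pk {z\<in>C. p<z \<and> z\<le>q'} {#z\<in>#N. p<z \<and> z\<le>q'#}"
  shows "q = q'"
proof -
  have main: False if qq: "q < q'"
    and pA: "pk {z\<in>C. p<z \<and> z\<le>q} {#z\<in>#N. p<z \<and> z\<le>q#}"
    and pA': "pk {z\<in>C. p<z \<and> z\<le>q'} {#z\<in>#N. p<z \<and> z\<le>q'#}"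
    and qC: "q \<in> C" and q'C: "q' \<in> C" and pq: "p < q" for q q'
  proof -
    have MaxA: "Max {z\<in>C. p<z \<and> z\<le>q'} = q'" using q'C fin qq pq by (intro Max_eqI) auto
    then have "rk {z\<in>C. p<z \<and> z\<le>q'} q \<le> cle {#z\<in>#N. p<z \<and> z\<le>q'#} q"
      using pA' qq unfolding pk_def by auto
    moreover have "{z\<in>{z\<in>C. p<z \<and> z\<le>q'}. z \<le> q} = {z\<in>C. p<z \<and> z\<le>q}" using qq by auto
    moreover have "{#z\<in>#{#z\<in>#N. p<z \<and> z\<le>q'#}. z \<le> q#} = {#z\<in>#N. p<z \<and> z\<le>q#}"
      using qq by (auto simp: filter_filter_mset intro!: filter_mset_cong)
    ultimately have "card {z\<in>C. p<z \<and> z\<le>q} \<le> size {#z\<in>#N. p<z \<and> z\<le>q#}"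
      unfolding rk_def cle_def by simp
    then show False using pA unfolding pk_def by simp
  qed
  show ?thesis
  proof (rule ccontr)
    assume "q \<noteq> q'"
    then have "q < q' \<or> q' < q" by auto
    then show False using main pA pA' qC q'C pq pq' by blast
  qed
qed




definition nxt :: "nat set \<Rightarrow> nat \<Rightarrow> nat" where
  "nxt C x = (if \<exists>z\<in>C. x < z then Min {z\<in>C. x < z} else Min C)"

definition cs :: "nat list \<Rightarrow> bool" where
  "cs l \<longleftrightarrow> (\<exists>w k. sorted_wrt (<) w \<and> l = rotate k w)"

lemma mset_rotate: "mset (rotate n xs) = mset xs"
  by (metis mset_append rotate_drop_take append_take_drop_id union_commute)

lemma sw_last: fixes xs :: "nat list" shows "sorted_wrt (<) xs \<Longrightarrow> z \<in> set xs \<Longrightarrow> z \<le> last xs"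
proof (induction xs)
  case Nil then show ?case by simp
next
  case (Cons x ys)
  show ?case
  proof (cases "ys = []")
    case True then show ?thesis using Cons by simp
  next
    case False
    then have l: "last (x # ys) = last ys" by simp
    have "last ys \<in> set ys" using False by simp
    then have "x < last ys" using Cons.prems(1) by simp
    then show ?thesis using Cons l by auto
  qed
qed

lemma sw_hd: fixes xs :: "nat list" shows "sorted_wrt (<) xs \<Longrightarrow> z \<in> set xs \<Longrightarrow> hd xs \<le> z"
  by (cases xs) auto

lemma H1:
  assumes "sorted_wrt (<) (x @ y)" "x \<noteq> []" "y \<noteq> []"
  shows "nxt (set (x @ y)) (last x) = hd y"
proof -
  have sx: "sorted_wrt (<) x" and sy: "sorted_wrt (<) y" and xy: "\<forall>u\<in>set x. \<forall>v\<in>set y. u < v"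
    using assms(1) by (auto simp: sorted_wrt_append)
  have hy: "hd y \<in> set y" using assms(3) by simp
  have lx: "last x \<in> set x" using assms(2) by simp
  have E: "{z\<in>set (x @ y). last x < z} = set y"
  proof (intro set_eqI iffI)
    fix z assume "z \<in> {z\<in>set (x @ y). last x < z}"
    then have "z \<in> set x \<or> z \<in> set y" "last x < z" by auto
    moreover have "z \<in> set x \<Longrightarrow> z \<le> last x" using sw_last[OF sx] by blast
    ultimately show "z \<in> set y" by auto
  next
    fix z assume "z \<in> set y" then show "z \<in> {z\<in>set (x @ y). last x < z}" using xy lx by auto
  qed
  have "\<exists>z\<in>set (x @ y). last x < z" using E hy by blast
  then have "nxt (set (x @ y)) (last x) = Min (set y)" unfolding nxt_def using E by simp
  also have "\<dots> = hd y" using hy sw_hd[OF sy] by (intro Min_eqI) auto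
  finally show ?thesis .
qed

lemma H2:
  assumes "sorted_wrt (<) w" "w \<noteq> []"
  shows "nxt (set w) (last w) = hd w"
proof -
  have "\<not> (\<exists>z\<in>set w. last w < z)" using sw_last[OF assms(1)] by (auto simp: not_less)
  then have "nxt (set w) (last w) = Min (set w)" unfolding nxt_def by simp
  also have "\<dots> = hd w" using assms sw_hd[OF assms(1)] by (intro Min_eqI) auto
  finally show ?thesis .
qed

lemma H3:
  fixes x y z :: "nat list"
  assumes "sorted_wrt (<) (x @ y @ z)" "x \<noteq> []" "y \<noteq> []"
  shows "set y = {u\<in>set (x @ y @ z). last x < u \<and> u \<le> last y}"
proof -
  have sx: "sorted_wrt (<) x" and sy: "sorted_wrt (<) y" and xy: "\<forall>u\<in>set x. \<forall>v\<in>set y. u < v"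
    and yz: "\<forall>u\<in>set y. \<forall>v\<in>set z. u < v"
    using assms(1) by (auto simp: sorted_wrt_append)
  have lx: "last x \<in> set x" using assms(2) by simp
  have ly: "last y \<in> set y" using assms(3) by simp
  show ?thesis
  proof (intro set_eqI iffI)
    fix u assume u: "u \<in> set y"
    then show "u \<in> {u\<in>set (x @ y @ z). last x < u \<and> u \<le> last y}"
      using xy lx sw_last[OF sy u] by auto
  next
    fix u assume u: "u \<in> {u\<in>set (x @ y @ z). last x < u \<and> u \<le> last y}"
    have "u \<notin> set x" using u sw_last[OF sx] by force
    moreover have "u \<notin> set z" using u yz ly by force
    ultimately show "u \<in> set y" using u by auto
  qed
qed

lemma rot_split:
  assumes "rotate k w = s @ t"
  shows "\<exists>a m b. w = a @ m @ b \<and> ((s = m \<and> t = b @ a) \<or> (t = m \<and> s = b @ a))"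
proof -
  define j where "j = k mod length w"
  have "s @ t = drop j w @ take j w" using assms rotate_drop_take[of k w] j_def by simp
  then obtain us where "(s = drop j w @ us \<and> us @ t = take j w) \<or> (s @ us = drop j w \<and> t = us @ take j w)"
    by (auto simp: append_eq_append_conv2)
  then show ?thesis
  proof
    assume h: "s = drop j w @ us \<and> us @ t = take j w"
    have "w = us @ t @ drop j w" using h by (metis append.assoc append_take_drop_id)
    then show ?thesis using h by blast
  next
    assume h: "s @ us = drop j w \<and> t = us @ take j w"
    have "w = take j w @ s @ us" using h by (metis append_take_drop_id)
    then show ?thesis using h by blast
  qed
qed

lemma seg_core:
  assumes sw: "sorted_wrt (<) (a @ m @ b)" and m: "m \<noteq> []" and ba: "b @ a \<noteq> []"
  defines "C \<equiv> set (a @ m @ b)"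
  shows "\<exists>P Q. P < Q \<and> {last m, last (b @ a)} = {P, Q} \<and>
     ((set m = {z\<in>C. P < z \<and> z \<le> Q} \<and> hd m = nxt C P \<and> hd (b @ a) = nxt C Q) \<or>
      (set (b @ a) = {z\<in>C. P < z \<and> z \<le> Q} \<and> hd (b @ a) = nxt C P \<and> hd m = nxt C Q))"
proof (cases "a = []")
  case False
  have la: "last (b @ a) = last a" using False by simp
  have "last a \<in> set a" "last m \<in> set m" using False m by auto
  then have lt: "last a < last m" using sw by (auto simp: sorted_wrt_append)
  have s1: "set m = {z\<in>C. last a < z \<and> z \<le> last m}" unfolding C_def by (rule H3[OF sw False m])
  have "nxt (set (a @ (m @ b))) (last a) = hd (m @ b)" using sw False m by (intro H1) auto
  then have h1: "hd m = nxt C (last a)" unfolding C_def using m by simp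
  have h2: "hd (b @ a) = nxt C (last m)"
  proof (cases "b = []")
    case True
    have "nxt (set (a @ m)) (last (a @ m)) = hd (a @ m)" using sw True False by (intro H2) auto
    then show ?thesis unfolding C_def using True False m by simp
  next
    case False2: False
    have "nxt (set ((a @ m) @ b)) (last (a @ m)) = hd b" using sw False2 m by (intro H1) auto
    then show ?thesis unfolding C_def using False2 m by simp
  qed
  show ?thesis
    apply (rule exI[of _ "last a"], rule exI[of _ "last m"])
    using lt la s1 h1 h2 by auto
next
  case True
  then have b: "b \<noteq> []" using ba by simp
  have la: "last (b @ a) = last b" using True by simp
  have sw': "sorted_wrt (<) (m @ b)" using sw True by simp
  have "last m \<in> set m" "last b \<in> set b" using b m by auto
  then have lt: "last m < last b" using sw' by (auto simp: sorted_wrt_append)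
  have "set b = {z\<in>set (m @ b @ []). last m < z \<and> z \<le> last b}" using sw' m b by (intro H3) auto
  then have s1: "set (b @ a) = {z\<in>C. last m < z \<and> z \<le> last b}" unfolding C_def using True by simp
  have "nxt (set (m @ b)) (last m) = hd b" using sw' m b by (intro H1) auto
  then have h1: "hd (b @ a) = nxt C (last m)" unfolding C_def using True b by simp
  have "nxt (set (m @ b)) (last (m @ b)) = hd (m @ b)" using sw' m by (intro H2) auto
  then have h2: "hd m = nxt C (last b)" unfolding C_def using True b m by simp
  show ?thesis
    apply (rule exI[of _ "last m"], rule exI[of _ "last b"])
    using lt la s1 h1 h2 by auto
qed

lemma seg:
  assumes sw: "sorted_wrt (<) w" and rot: "rotate k w = s @ t" and s: "s \<noteq> []" and t: "t \<noteq> []"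
  shows "\<exists>P Q. P < Q \<and> {last s, last t} = {P, Q} \<and>
     ((set s = {z\<in>set w. P < z \<and> z \<le> Q} \<and> hd s = nxt (set w) P \<and> hd t = nxt (set w) Q) \<or>
      (set t = {z\<in>set w. P < z \<and> z \<le> Q} \<and> hd t = nxt (set w) P \<and> hd s = nxt (set w) Q))
     \<and> cs s \<and> cs t"
proof -
  obtain a m b where w: "w = a @ m @ b" and st: "(s = m \<and> t = b @ a) \<or> (t = m \<and> s = b @ a)"
    using rot_split[OF rot] by blast
  have sw2: "sorted_wrt (<) (a @ m @ b)" using sw w by simp
  have csm: "cs m" unfolding cs_def using sw2
    by (intro exI[of _ m] exI[of _ 0]) (auto simp: sorted_wrt_append)
  have csba: "cs (b @ a)" unfolding cs_def
  proof (intro exI conjI)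
    show "sorted_wrt (<) (a @ b)" using sw2 by (auto simp: sorted_wrt_append)
    show "b @ a = rotate (length a) (a @ b)" by (simp add: rotate_append)
  qed
  from st show ?thesis
  proof
    assume h: "s = m \<and> t = b @ a"
    then show ?thesis using seg_core[OF sw2] s t w csm csba by auto
  next
    assume h: "t = m \<and> s = b @ a"
    obtain P Q where PQ: "P < Q \<and> {last m, last (b @ a)} = {P, Q} \<and>
     ((set m = {z\<in>set w. P < z \<and> z \<le> Q} \<and> hd m = nxt (set w) P \<and> hd (b @ a) = nxt (set w) Q) \<or>
      (set (b @ a) = {z\<in>set w. P < z \<and> z \<le> Q} \<and> hd (b @ a) = nxt (set w) P \<and> hd m = nxt (set w) Q))"
      using seg_core[OF sw2] s t h w by auto
    show ?thesis
      apply (rule exI[of _ P], rule exI[of _ Q])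
      using PQ h csm csba by auto
  qed
qed




lemma cle_add: "cle (add_mset p N) x = (if p \<le> x then 1 else 0) + cle N x"
  unfolding cle_def by simp

lemma exist_core:
  fixes C :: "nat set"
  assumes pkC: "pk C (add_mset p N)"
  shows "\<exists>q\<in>C. p<q \<and> pk {z\<in>C. p<z \<and> z\<le>q} {#z\<in>#N. p<z \<and> z\<le>q#}
                 \<and> pk {z\<in>C. \<not>(p<z \<and> z\<le>q)} {#z\<in>#N. \<not>(p<z \<and> z\<le>q)#}"
proof -
  have fin: "finite C" and sz: "size N + 2 = card C" and sub: "set_mset (add_mset p N) \<subseteq> C"
    and pre: "\<forall>x<Max C. rk C x \<le> cle (add_mset p N) x" using pkC unfolding pk_def by auto
  have pC: "p \<in> C" and NC: "set_mset N \<subseteq> C" using sub by auto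
  have pMax: "p < Max C" using pk_lt_Max[OF pkC] by simp
  have MaxC: "Max C \<in> C" using fin pC by (intro Max_in) auto
  have allle: "\<forall>z\<in>C. z \<le> Max C" using fin by simp
  define D where "D x = {z\<in>C. p<z \<and> z\<le>x}" for x
  define cnt where "cnt x = size {#z\<in>#N. p<z \<and> z\<le>x#}" for x
  define Bad where "Bad = {c\<in>C. p<c \<and> cnt c < card (D c)}"
  have finD: "finite (D x)" for x using fin D_def by auto
  have cnt_mono: "cnt x \<le> cnt y" if "x \<le> y" for x y
  proof -
    have "{#z\<in>#N. p<z \<and> z\<le>x#} \<subseteq># {#z\<in>#N. p<z \<and> z\<le>y#}"
      by (rule filter_mset_mono_strong) (use that in auto)
    then show ?thesis unfolding cnt_def by (rule size_mset_mono)
  qed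
  have "rk C p \<le> cle (add_mset p N) p" using pre pMax by blast
  then have preP: "rk C p \<le> 1 + cle N p" using cle_add[of p N p] by simp
  have sN: "size N = cle N p + size {#z\<in>#N. \<not> z \<le> p#}"
    unfolding cle_def by (rule size_split)
  have cC: "card C = rk C p + card {z\<in>C. \<not> z \<le> p}"
    unfolding rk_def by (rule card_split[OF fin])
  have e1: "{#z\<in>#N. p<z \<and> z\<le>Max C#} = {#z\<in>#N. \<not> z \<le> p#}"
  proof (rule filter_mset_cong)
    fix z assume "z \<in># N" then have "z \<le> Max C" using NC allle by auto
    then show "(p<z \<and> z\<le>Max C) = (\<not> z \<le> p)" by auto
  qed simp
  have e2: "D (Max C) = {z\<in>C. \<not> z \<le> p}" unfolding D_def using allle by auto
  have "Max C \<in> D (Max C)" unfolding D_def using MaxC pMax by auto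
  then have "card (D (Max C)) \<ge> 1" using finD by (metis One_nat_def Suc_leI card_gt_0_iff empty_iff)
  then have "cnt (Max C) < card (D (Max C))"
    unfolding cnt_def using e1 e2 sN cC preP sz by simp
  then have MaxBad: "Max C \<in> Bad" unfolding Bad_def using MaxC pMax by simp
  have finBad: "finite Bad" unfolding Bad_def using fin by simp
  define q where "q = Min Bad"
  have qBad: "q \<in> Bad" unfolding q_def using finBad MaxBad by (intro Min_in) auto
  have qmin: "\<And>c. c \<in> Bad \<Longrightarrow> q \<le> c" unfolding q_def using finBad by simp
  have qC: "q \<in> C" and pq: "p < q" and qlt: "cnt q < card (D q)" using qBad unfolding Bad_def by auto
  have L: "card (D x) \<le> cnt x" if xq: "x < q" for x
  proof (cases "D x = {}")
    case True then show ?thesis by simp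
  next
    case False
    define c where "c = Max (D x)"
    have cD: "c \<in> D x" unfolding c_def using False finD by (intro Max_in) auto
    have cle: "\<forall>z\<in>D x. z \<le> c" unfolding c_def using finD by simp
    have cC: "c \<in> C" and pc: "p < c" and cx: "c \<le> x" using cD unfolding D_def by auto
    have "c \<notin> Bad" using qmin cx xq by (meson le_trans not_le)
    then have "card (D c) \<le> cnt c" unfolding Bad_def using cC pc by auto
    moreover have "D c = D x" using cle cx unfolding D_def by auto
    moreover have "cnt c \<le> cnt x" using cx by (rule cnt_mono)
    ultimately show ?thesis by simp
  qed
  have Dq: "D (q - 1) = D q - {q}" unfolding D_def using pq by auto
  have qD: "q \<in> D q" unfolding D_def using qC pq by auto
  have "card (D (q - 1)) = card (D q) - 1" using Dq qD finD by simp
  moreover have "card (D (q-1)) \<le> cnt (q-1)" using L pq by simp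
  moreover have "cnt (q-1) \<le> cnt q" by (rule cnt_mono) simp
  ultimately have cntq: "cnt q + 1 = card (D q)" using qlt by linarith
  define A where "A = {z\<in>C. p<z \<and> z\<le>q}"
  define B where "B = {z\<in>C. \<not>(p<z \<and> z\<le>q)}"
  define NA where "NA = {#z\<in>#N. p<z \<and> z\<le>q#}"
  define NB where "NB = {#z\<in>#N. \<not>(p<z \<and> z\<le>q)#}"
  have AD: "A = D q" unfolding A_def D_def by simp
  have NAc: "size NA = cnt q" unfolding NA_def cnt_def by simp
  have finA: "finite A" "finite B" unfolding A_def B_def using fin by auto
  have MaxA: "Max A = q" using qC pq finA unfolding A_def by (intro Max_eqI) auto
  have cCAB: "card C = card A + card B" unfolding A_def B_def by (rule card_split[OF fin])
  have sNAB: "size N = size NA + size NB" unfolding NA_def NB_def by (rule size_split)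
  have pkA: "pk A NA"
    unfolding pk_def
  proof (intro conjI allI impI)
    show "finite A" by (rule finA)
    show "A \<noteq> {}" using qD AD by auto
    show "size NA + 1 = card A" using NAc cntq AD by simp
    show "set_mset NA \<subseteq> A" unfolding NA_def A_def using NC by auto
    fix x assume "x < Max A"
    then have xq: "x < q" using MaxA by simp
    have "{z\<in>A. z \<le> x} = D x" unfolding A_def D_def using xq by auto
    moreover have "{#z\<in>#NA. z \<le> x#} = {#z\<in>#N. p<z \<and> z\<le>x#}"
      unfolding NA_def using xq by (auto simp: filter_filter_mset intro!: filter_mset_cong)
    ultimately show "rk A x \<le> cle NA x" unfolding rk_def cle_def using L[OF xq] cnt_def by simp
  qed
  have pkB: "pk B NB"
    unfolding pk_def
  proof (intro conjI allI impI)
    show "finite B" by (rule finA)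
    show "B \<noteq> {}" using pC unfolding B_def by auto
    show "size NB + 1 = card B" using sNAB cCAB NAc cntq AD sz by simp
    show "set_mset NB \<subseteq> B" unfolding NB_def B_def using NC by auto
    fix x assume xB: "x < Max B"
    have MaxBC: "Max B \<le> Max C" using fin finA MaxC pC unfolding B_def by (intro Max_mono) auto
    have rkC: "rk C x = rk A x + rk B x" unfolding A_def B_def rk_def
      using rk_split[OF fin, of x "\<lambda>z. p<z \<and> z\<le>q"] unfolding rk_def by simp
    have cleN: "cle N x = cle NA x + cle NB x" unfolding NA_def NB_def by (rule cle_split)
    show "rk B x \<le> cle NB x"
    proof (cases "x < p")
      case True
      have "rk A x = 0" unfolding rk_def A_def using True by auto
      moreover have "cle NA x = 0" unfolding cle_def NA_def using True by auto
      moreover have "rk C x \<le> cle (add_mset p N) x" using pre True pMax by simp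
      moreover have "cle (add_mset p N) x = cle N x" using cle_add[of p N x] True by simp
      ultimately show ?thesis using rkC cleN by simp
    next
      case False
      show ?thesis
      proof (cases "x \<le> q")
        case True
        have "B \<noteq> {}" using pC unfolding B_def by auto
        then have "Max B \<in> B" using finA by (intro Max_in) auto
        then obtain y where yB: "y \<in> B" and xy: "x < y" using xB by blast
        have qy: "q < y" using yB xy False unfolding B_def by auto
        have qM: "q < Max C" using qy yB allle unfolding B_def by fastforce
        have "rk C q \<le> cle (add_mset p N) q" using pre qM by blast
        then have pq': "rk C q \<le> 1 + cle N q" using cle_add[of p N q] pq by simp
        have rkq: "rk C q = rk C p + card A"
        proof -
          have "rk C q = rk {z\<in>C. p<z \<and> z\<le>q} q + rk {z\<in>C. \<not>(p<z \<and> z\<le>q)} q"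
            by (rule rk_split[OF fin])
          moreover have "{z\<in>{z\<in>C. p<z \<and> z\<le>q}. z \<le> q} = A" unfolding A_def by auto
          moreover have "{z\<in>{z\<in>C. \<not>(p<z \<and> z\<le>q)}. z \<le> q} = {z\<in>C. z \<le> p}" using pq by auto
          ultimately show ?thesis unfolding rk_def by simp
        qed
        have cleq: "cle N q = cle N p + cnt q"
        proof -
          have "cle N q = cle {#z\<in>#N. p<z \<and> z\<le>q#} q + cle {#z\<in>#N. \<not>(p<z \<and> z\<le>q)#} q"
            by (rule cle_split)
          moreover have "{#z\<in>#{#z\<in>#N. p<z \<and> z\<le>q#}. z \<le> q#} = {#z\<in>#N. p<z \<and> z\<le>q#}"
            by (auto simp: filter_filter_mset intro!: filter_mset_cong)
          moreover have "{#z\<in>#{#z\<in>#N. \<not>(p<z \<and> z\<le>q)#}. z \<le> q#} = {#z\<in>#N. z\<le>p#}"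
            using pq by (auto simp: filter_filter_mset intro!: filter_mset_cong)
          ultimately show ?thesis unfolding cle_def cnt_def by simp
        qed
        have "{z\<in>B. z \<le> x} = {z\<in>C. z \<le> p}" using True False unfolding B_def by auto
        then have rkB: "rk B x = rk C p" unfolding rk_def by simp
        have "{#z\<in>#NB. z \<le> x#} = {#z\<in>#N. z\<le>p#}"
          unfolding NB_def using True False by (auto simp: filter_filter_mset intro!: filter_mset_cong)
        then have cleB: "cle NB x = cle N p" unfolding cle_def by simp
        show ?thesis using rkB cleB pq' rkq cleq cntq AD by simp
      next
        case False
        then have qx: "q < x" by simp
        have "rk A x = card A" using rk_full[OF finA(1)] MaxA qx by simp
        moreover have "cle NA x = size NA"
          using cle_full[of NA A x] finA MaxA qx unfolding NA_def A_def using NC by auto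
        moreover have "x < Max C" using xB MaxBC by simp
        then have "rk C x \<le> cle (add_mset p N) x" using pre by blast
        then have "rk C x \<le> 1 + cle N x" using cle_add[of p N x] by (simp split: if_splits)
        ultimately show ?thesis using rkC cleN NAc cntq AD by simp
      qed
    qed
  qed
  show ?thesis
    apply (rule bexI[of _ q])
    using pq pkA pkB unfolding A_def B_def NA_def NB_def apply simp
    by (rule qC)
qed




definition labs :: "arm list \<Rightarrow> nat set" where
  "labs R = set (map short R)"

definition Inv :: "arm list list \<Rightarrow> bool" where
  "Inv S \<longleftrightarrow> distinct (map short (concat S)) \<and> (\<forall>R\<in>set S. R \<noteq> [] \<and> cs (map short R))"

lemma cs_rot: "cs l \<Longrightarrow> cs (rotate n l)"
  unfolding cs_def by (metis rotate_rotate)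

lemma two_eq: "{u, v} = {a, b} \<Longrightarrow> (a::nat) < b \<Longrightarrow> min v u = a \<and> max v u = b"
  by (auto simp: doubleton_eq_iff)

lemma step_info:
  assumes inv: "Inv (S1 @ R # S2)" and rot: "rotate k R = \<alpha> # xs @ \<beta> # ys"
  defines "P \<equiv> min (short (last (\<beta> # ys))) (short (last (\<alpha> # xs)))"
      and "Q \<equiv> max (short (last (\<beta> # ys))) (short (last (\<alpha> # xs)))"
  shows "P < Q \<and> P \<in> labs R \<and> Q \<in> labs R \<and>
    ((labs (xs @ [New \<alpha> \<beta>]) = {z\<in>labs R. P<z \<and> z\<le>Q} \<and> labs (ys @ [New \<beta> \<alpha>]) = {z\<in>labs R. \<not>(P<z \<and> z\<le>Q)}) \<or>
     (labs (ys @ [New \<beta> \<alpha>]) = {z\<in>labs R. P<z \<and> z\<le>Q} \<and> labs (xs @ [New \<alpha> \<beta>]) = {z\<in>labs R. \<not>(P<z \<and> z\<le>Q)})) \<and>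
    {short \<alpha>, short \<beta>} = {nxt (labs R) P, nxt (labs R) Q} \<and>
    short \<alpha> \<noteq> short \<beta> \<and>
    short \<alpha> \<notin> short ` (set (concat S1) \<union> set xs \<union> set ys \<union> set (concat S2)) \<and>
    short \<beta> \<notin> short ` (set (concat S1) \<union> set xs \<union> set ys \<union> set (concat S2)) \<and>
    set xs \<union> set ys \<union> {\<alpha>, \<beta>} = set R \<and>
    Inv (S1 @ (xs @ [New \<alpha> \<beta>]) # (ys @ [New \<beta> \<alpha>]) # S2)"
proof -
  have dist: "distinct (map short (concat (S1 @ R # S2)))" and regs: "\<forall>R\<in>set (S1 @ R # S2). R \<noteq> [] \<and> cs (map short R)"
    using inv unfolding Inv_def by auto
  have "cs (map short R)" using regs by simp
  then obtain w k0 where sw: "sorted_wrt (<) w" and lr: "map short R = rotate k0 w" unfolding cs_def by blast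
  define s where "s = short \<alpha> # map short xs"
  define t where "t = short \<beta> # map short ys"
  have "map short (rotate k R) = s @ t" unfolding s_def t_def using rot by simp
  then have rot2: "rotate (k + k0) w = s @ t" using lr by (metis rotate_map rotate_rotate)
  have setw: "set w = labs R" unfolding labs_def using lr by simp
  obtain P' Q' where PQ: "P' < Q'" "{last s, last t} = {P', Q'}" and
     sets: "((set s = {z\<in>set w. P' < z \<and> z \<le> Q'} \<and> hd s = nxt (set w) P' \<and> hd t = nxt (set w) Q') \<or>
      (set t = {z\<in>set w. P' < z \<and> z \<le> Q'} \<and> hd t = nxt (set w) P' \<and> hd s = nxt (set w) Q'))"
     and css: "cs s" "cs t"
    using seg[OF sw rot2] s_def t_def by auto
  have ls: "last s = short (last (\<alpha> # xs))" unfolding s_def by (metis last_map list.simps(9) list.distinct(1))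
  have lt: "last t = short (last (\<beta> # ys))" unfolding t_def by (metis last_map list.simps(9) list.distinct(1))
  have PP: "P = P'" and QQ: "Q = Q'" using two_eq[OF PQ(2) PQ(1)] ls lt P_def Q_def by auto
  have dR: "distinct (map short R)" using dist by simp
  then have dst: "distinct (s @ t)" using rot2 lr by (metis distinct_rotate)
  have un: "set s \<union> set t = labs R" using rot2 setw by (metis set_append set_rotate)
  have disj: "set s \<inter> set t = {}" using dst by simp
  have lX: "labs (xs @ [New \<alpha> \<beta>]) = set s" unfolding labs_def s_def by auto
  have lY: "labs (ys @ [New \<beta> \<alpha>]) = set t" unfolding labs_def t_def by auto
  have sets2: "(labs (xs @ [New \<alpha> \<beta>]) = {z\<in>labs R. P<z \<and> z\<le>Q} \<and> labs (ys @ [New \<beta> \<alpha>]) = {z\<in>labs R. \<not>(P<z \<and> z\<le>Q)}) \<or>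
     (labs (ys @ [New \<beta> \<alpha>]) = {z\<in>labs R. P<z \<and> z\<le>Q} \<and> labs (xs @ [New \<alpha> \<beta>]) = {z\<in>labs R. \<not>(P<z \<and> z\<le>Q)})"
    using sets un disj lX lY PP QQ setw by auto
  have hds: "{short \<alpha>, short \<beta>} = {nxt (labs R) P, nxt (labs R) Q}"
    using sets PP QQ setw unfolding s_def t_def by auto
  have "last s \<in> set s" "last t \<in> set t" unfolding s_def t_def by (intro last_in_set; simp)+
  then have lin: "last s \<in> labs R" "last t \<in> labs R" using un by auto
  have "P' \<in> {last s, last t}" "Q' \<in> {last s, last t}" using PQ(2) by auto
  then have inR: "P \<in> labs R" "Q \<in> labs R" using lin PP QQ by auto
  have mR: "mset (map short R) = mset (s @ t)" using rot2 lr by (metis mset_rotate)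
  have mR2: "mset R = mset (\<alpha> # xs @ \<beta> # ys)" using rot by (metis mset_rotate)
  have setR: "set xs \<union> set ys \<union> {\<alpha>, \<beta>} = set R" using mR2 by (metis mset_eq_setD set_append list.set(2) Un_insert_right
      Un_commute insert_commute sup_bot_right Un_assoc Un_insert_left)
  have "mset (map short (concat (S1 @ R # S2))) = mset (map short (concat S1) @ (s @ t) @ map short (concat S2))"
    using mR by simp
  then have dist2: "distinct (map short (concat S1) @ (s @ t) @ map short (concat S2))"
    using dist mset_eq_imp_distinct_iff by blast
  have fresh: "short \<alpha> \<notin> short ` (set (concat S1) \<union> set xs \<union> set ys \<union> set (concat S2)) \<and>
    short \<beta> \<notin> short ` (set (concat S1) \<union> set xs \<union> set ys \<union> set (concat S2)) \<and> short \<alpha> \<noteq> short \<beta>"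
    using dist2 unfolding s_def t_def by auto
  have "mset (map short (concat (S1 @ (xs @ [New \<alpha> \<beta>]) # (ys @ [New \<beta> \<alpha>]) # S2))) =
        mset (map short (concat S1) @ (s @ t) @ map short (concat S2))"
    unfolding s_def t_def by simp
  then have dist3: "distinct (map short (concat (S1 @ (xs @ [New \<alpha> \<beta>]) # (ys @ [New \<beta> \<alpha>]) # S2)))"
    using dist2 mset_eq_imp_distinct_iff by blast
  have "map short (xs @ [New \<alpha> \<beta>]) = rotate 1 s" unfolding s_def by simp
  then have c1: "cs (map short (xs @ [New \<alpha> \<beta>]))" using cs_rot[OF css(1), of 1] by simp
  have "map short (ys @ [New \<beta> \<alpha>]) = rotate 1 t" unfolding t_def by simp
  then have c2: "cs (map short (ys @ [New \<beta> \<alpha>]))" using cs_rot[OF css(2), of 1] by simp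
  have inv2: "Inv (S1 @ (xs @ [New \<alpha> \<beta>]) # (ys @ [New \<beta> \<alpha>]) # S2)"
    unfolding Inv_def using dist3 regs c1 c2 by auto
  show ?thesis using PQ(1) PP QQ inR sets2 hds fresh setR inv2 by blast
qed

lemma constr:
  assumes csR: "cs (map short R)" and dR: "distinct (map short R)"
    and pR: "p \<in> labs R" and qR: "q \<in> labs R" and pq: "p < q"
  shows "\<exists>k \<alpha> xs \<beta> ys. rotate k R = \<alpha> # xs @ \<beta> # ys \<and> short (last (\<beta> # ys)) = p \<and> short (last (\<alpha> # xs)) = q"
proof -
  obtain w k0 where sw: "sorted_wrt (<) w" and lr: "map short R = rotate k0 w" using csR unfolding cs_def by blast
  have setw: "set w = labs R" unfolding labs_def using lr by simp
  obtain i where i: "i < length w" "w ! i = p" using pR setw by (metis in_set_conv_nth)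
  obtain j where j: "j < length w" "w ! j = q" using qR setw by (metis in_set_conv_nth)
  have ij: "i < j"
  proof (rule ccontr)
    assume "\<not> i < j"
    then have "j < i \<or> j = i" by auto
    then show False
    proof
      assume "j < i" then have "w ! j < w ! i" using sorted_wrt_nth_less[OF sw] i by blast
      then show False using i j pq by simp
    next
      assume "j = i" then show False using i j pq by simp
    qed
  qed
  define L where "L = length w"
  have Lpos: "L > 0" using i(1) unfolding L_def by linarith
  define a where "a = take (i+1) w"
  define m where "m = take (j-i) (drop (i+1) w)"
  define b where "b = drop (j-i) (drop (i+1) w)"
  have dm: "drop (i+1) w = m @ b" unfolding m_def b_def by (rule append_take_drop_id[symmetric])
  have rw: "rotate (i+1) w = m @ b @ a"
    using rotate_drop_take[of "i+1" w] i dm unfolding a_def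
    by (metis append_assoc mod_less Suc_leI Suc_eq_plus1 le_neq_implies_less rotate_append
        append_take_drop_id length_take min_absorb2 less_imp_le_nat)
  have lm: "length m = j - i" unfolding m_def using j ij by simp
  have mne: "m \<noteq> []" using lm ij by auto
  have lastm: "last m = q"
  proof -
    have "last m = m ! (j - i - 1)" using mne lm by (simp add: last_conv_nth)
    also have "\<dots> = w ! (i + 1 + (j - i - 1))" unfolding m_def using ij j by simp
    also have "i + 1 + (j - i - 1) = j" using ij by simp
    finally show ?thesis using j by simp
  qed
  have ane: "a \<noteq> []" unfolding a_def using i(1) by (cases w) auto
  have lasta: "last a = p"
  proof -
    have "length a = i + 1" unfolding a_def using i by simp
    then have "last a = a ! i" using ane by (simp add: last_conv_nth)
    then show ?thesis unfolding a_def using i by simp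
  qed
  define k where "k = i + 1 + (L - k0 mod L)"
  have kk: "(L - k0 mod L + k0) mod L = 0"
  proof -
    have h1: "k0 = L * (k0 div L) + k0 mod L" by simp
    have h2: "k0 mod L < L" using Lpos by simp
    have "L - k0 mod L + k0 = L * (k0 div L) + L" using h1 h2 by arith
    then show ?thesis by simp
  qed
  have "rotate (k + k0) w = rotate (i+1) (rotate (L - k0 mod L + k0) w)"
    unfolding k_def by (simp add: rotate_rotate add.assoc)
  also have "rotate (L - k0 mod L + k0) w = w" using kk L_def by simp
  finally have rk0: "rotate (k + k0) w = m @ b @ a" using rw by simp
  define R' where "R' = rotate k R"
  have mR': "map short R' = m @ b @ a" unfolding R'_def using lr rk0 by (metis rotate_map rotate_rotate)
  define X where "X = take (length m) R'"
  define Y where "Y = drop (length m) R'"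
  have mX: "map short X = m" unfolding X_def using mR' by (metis append_eq_conv_conj take_map)
  have mY: "map short Y = b @ a" unfolding Y_def using mR' by (metis append_eq_conv_conj drop_map)
  have Xne: "X \<noteq> []" using mX mne by auto
  have Yne: "Y \<noteq> []" using mY ane by auto
  obtain \<alpha> xs where X: "X = \<alpha> # xs" using Xne by (cases X) auto
  obtain \<beta> ys where Y: "Y = \<beta> # ys" using Yne by (cases Y) auto
  have "R' = X @ Y" unfolding X_def Y_def by simp
  then have "rotate k R = \<alpha> # xs @ \<beta> # ys" unfolding R'_def using X Y by simp
  moreover have "short (last (\<alpha> # xs)) = q" using mX X lastm by (metis last_map list.distinct(1))
  moreover have "short (last (\<beta> # ys)) = p" using mY Y lasta ane by (metis last_map list.distinct(1) last_appendR)
  ultimately show ?thesis by blast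
qed




definition Good :: "arm list list \<Rightarrow> nat list \<Rightarrow> bool" where
  "Good S as \<longleftrightarrow> (\<forall>R\<in>set S. pk (labs R) (filter_mset (\<lambda>z. z \<in> labs R) (mset as)))
      \<and> (\<forall>z\<in>set as. \<exists>R\<in>set S. z \<in> labs R)"

lemma pkXY: "(lX = A \<and> lY = B) \<or> (lY = A \<and> lX = B) \<Longrightarrow> pk lX (F lX) \<Longrightarrow> pk lY (F lY)
   \<Longrightarrow> pk A (F A) \<and> pk B (F B)"
  by auto

lemma inv_dist: "distinct (map short (concat S)) \<Longrightarrow> R \<in> set S \<Longrightarrow> distinct (map short R)"
  by (induction S) auto

lemma pkXY2: "(lX = A \<and> lY = B) \<or> (lY = A \<and> lX = B) \<Longrightarrow> pk A (F A) \<Longrightarrow> pk B (F B)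
   \<Longrightarrow> pk lX (F lX) \<and> pk lY (F lY)"
  by auto

lemma dis3: "distinct (A @ B @ C) \<Longrightarrow> set A \<inter> set B = {} \<and> set B \<inter> set C = {}"
  by auto

lemma labs_disj:
  assumes "Inv (S1 @ R # S2)" "R0 \<in> set S1 \<union> set S2"
  shows "labs R0 \<inter> labs R = {}"
proof -
  have "distinct (map short (concat S1) @ map short R @ map short (concat S2))"
    using assms(1) unfolding Inv_def by simp
  then have d1: "set (map short (concat S1)) \<inter> set (map short R) = {}"
    and d2: "set (map short R) \<inter> set (map short (concat S2)) = {}" using dis3 by blast+
  have "labs R0 \<subseteq> set (map short (concat S1)) \<or> labs R0 \<subseteq> set (map short (concat S2))"
    using assms(2) unfolding labs_def by auto
  then show ?thesis using d1 d2 unfolding labs_def by blast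
qed

lemma filt_AB:
  assumes "A = {z\<in>C. Pr z}"
  shows "{#z \<in># {#z \<in># M. z \<in> C#}. Pr z#} = {#z \<in># M. z \<in> A#}"
  using assms by (auto simp: filter_filter_mset intro!: filter_mset_cong)

lemma sound: "play S ms as \<Longrightarrow> Inv S \<Longrightarrow> Good S as"
proof (induction rule: play.induct)
  case (stop S)
  have "pk (labs R) {#}" if "R \<in> set S" for R
  proof -
    have "R \<noteq> []" "length R \<le> 1" using stop that unfolding Inv_def by auto
    then obtain x where "R = [x]" by (cases R) auto
    then have L: "labs R = {short x}" unfolding labs_def by simp
    have "rk (labs R) y \<le> cle {#} y" if y: "y < Max (labs R)" for y
    proof -
      have "y < short x" using y L by simp
      then have "{z\<in>labs R. z \<le> y} = {}" using L by auto
      then show ?thesis unfolding rk_def by (simp only: card.empty le0)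
    qed
    then have "\<forall>y<Max (labs R). rk (labs R) y \<le> cle {#} y" by blast
    then show ?thesis unfolding pk_def using L by simp
  qed
  then show ?case unfolding Good_def by simp
next
  case (step S S1 R S2 k \<alpha> xs \<beta> ys ms as)
  define P where "P = min (short (last (\<beta> # ys))) (short (last (\<alpha> # xs)))"
  define Q where "Q = max (short (last (\<beta> # ys))) (short (last (\<alpha> # xs)))"
  define X where "X = xs @ [New \<alpha> \<beta>]"
  define Y where "Y = ys @ [New \<beta> \<alpha>]"
  define C where "C = labs R"
  have inv: "Inv (S1 @ R # S2)" using step by simp
  note si = step_info[OF inv step.hyps(2)]
  have PQ: "P < Q" "P \<in> C" "Q \<in> C" using si unfolding P_def Q_def C_def by auto
  have XY: "(labs X = {z\<in>C. P<z \<and> z\<le>Q} \<and> labs Y = {z\<in>C. \<not>(P<z \<and> z\<le>Q)}) \<or>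
     (labs Y = {z\<in>C. P<z \<and> z\<le>Q} \<and> labs X = {z\<in>C. \<not>(P<z \<and> z\<le>Q)})"
    using si unfolding P_def Q_def C_def X_def Y_def by blast
  have inv2: "Inv (S1 @ X # Y # S2)" using si unfolding X_def Y_def by blast
  have G: "Good (S1 @ X # Y # S2) as" using step.IH inv2 X_def Y_def by simp
  have GX: "pk (labs X) {#z \<in># mset as. z \<in> labs X#}" and GY: "pk (labs Y) {#z \<in># mset as. z \<in> labs Y#}"
    using G unfolding Good_def by auto
  define N where "N = {#z \<in># mset as. z \<in> C#}"
  have NA: "{#z \<in># N. P<z \<and> z\<le>Q#} = {#z \<in># mset as. z \<in> {z\<in>C. P<z \<and> z\<le>Q}#}"
    unfolding N_def by (rule filt_AB) simp
  have NB: "{#z \<in># N. \<not>(P<z \<and> z\<le>Q)#} = {#z \<in># mset as. z \<in> {z\<in>C. \<not>(P<z \<and> z\<le>Q)}#}"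
    unfolding N_def by (rule filt_AB) simp
  have pA: "pk {z\<in>C. P<z \<and> z\<le>Q} {#z \<in># N. P<z \<and> z\<le>Q#}"
    and pB: "pk {z\<in>C. \<not>(P<z \<and> z\<le>Q)} {#z \<in># N. \<not>(P<z \<and> z\<le>Q)#}"
  proof -
    have "pk {z\<in>C. P<z \<and> z\<le>Q} ((\<lambda>L. {#z \<in># mset as. z \<in> L#}) {z\<in>C. P<z \<and> z\<le>Q}) \<and>
          pk {z\<in>C. \<not>(P<z \<and> z\<le>Q)} ((\<lambda>L. {#z \<in># mset as. z \<in> L#}) {z\<in>C. \<not>(P<z \<and> z\<le>Q)})"
      by (rule pkXY[OF XY]) (use GX GY in auto)
    then show "pk {z\<in>C. P<z \<and> z\<le>Q} {#z \<in># N. P<z \<and> z\<le>Q#}"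
      and "pk {z\<in>C. \<not>(P<z \<and> z\<le>Q)} {#z \<in># N. \<not>(P<z \<and> z\<le>Q)#}" unfolding NA NB by auto
  qed
  have finC: "finite C" unfolding C_def labs_def by simp
  have pkC: "pk C (add_mset P N)"
    by (rule sound_core[OF finC PQ(2) PQ(3) PQ(1) _ pA pB]) (auto simp: N_def)
  have "pk (labs R0) {#z \<in># mset (P # as). z \<in> labs R0#}" if R0: "R0 \<in> set S" for R0
  proof (cases "R0 = R")
    case True
    then show ?thesis using pkC PQ(2) unfolding N_def C_def by simp
  next
    case False
    then have R0S: "R0 \<in> set S1 \<union> set S2" using R0 step.hyps(1) by auto
    then have "labs R0 \<inter> C = {}" using labs_disj[OF inv] C_def by blast
    then have "P \<notin> labs R0" using PQ(2) by auto
    moreover have "pk (labs R0) {#z \<in># mset as. z \<in> labs R0#}" using G R0S unfolding Good_def by auto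
    ultimately show ?thesis by simp
  qed
  moreover have "\<exists>R0\<in>set S. z \<in> labs R0" if z: "z \<in> set (P # as)" for z
  proof (cases "z \<in> C")
    case True then show ?thesis using step.hyps(1) C_def by auto
  next
    case False
    then have "z \<noteq> P" using PQ by auto
    then have "z \<in> set as" using z by simp
    then obtain R0 where R0: "R0 \<in> set (S1 @ X # Y # S2)" "z \<in> labs R0" using G unfolding Good_def by blast
    have "labs X \<subseteq> C" "labs Y \<subseteq> C" using XY by auto
    then have "R0 \<in> set S1 \<union> set S2" using R0 False by auto
    then show ?thesis using R0 step.hyps(1) by auto
  qed
  ultimately show ?case unfolding Good_def P_def by blast
qed

lemma complete: "Inv S \<Longrightarrow> Good S as \<Longrightarrow> \<exists>ms. play S ms as"
proof (induction as arbitrary: S)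
  case Nil
  have "\<forall>R\<in>set S. length R \<le> 1"
  proof
    fix R assume R: "R \<in> set S"
    then have "pk (labs R) {#}" using Nil unfolding Good_def by auto
    then have "card (labs R) = 1" unfolding pk_def by simp
    moreover have "distinct (map short R)" using Nil R unfolding Inv_def using inv_dist by blast
    ultimately have "length (map short R) = 1" unfolding labs_def using distinct_card by metis
    then show "length R \<le> 1" by simp
  qed
  then show ?case using play.stop by blast
next
  case (Cons p as)
  obtain R where R: "R \<in> set S" "p \<in> labs R" using Cons.prems(2) unfolding Good_def by auto
  obtain S1 S2 where S: "S = S1 @ R # S2" using R(1) by (metis split_list)
  define C where "C = labs R"
  define N where "N = {#z \<in># mset as. z \<in> C#}"
  have "pk C {#z \<in># mset (p # as). z \<in> C#}" using Cons.prems(2) R unfolding Good_def C_def by auto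
  then have pkC: "pk C (add_mset p N)" using R(2) unfolding N_def C_def by simp
  obtain q where q: "q \<in> C" "p < q" and pA: "pk {z\<in>C. p<z \<and> z\<le>q} {#z\<in>#N. p<z \<and> z\<le>q#}"
    and pB: "pk {z\<in>C. \<not>(p<z \<and> z\<le>q)} {#z\<in>#N. \<not>(p<z \<and> z\<le>q)#}"
    using exist_core[OF pkC] by blast
  have inv: "Inv (S1 @ R # S2)" using Cons.prems(1) S by simp
  have csR: "cs (map short R)" using inv unfolding Inv_def by auto
  have dR: "distinct (map short R)" using inv inv_dist unfolding Inv_def by auto
  obtain k \<alpha> xs \<beta> ys where rot: "rotate k R = \<alpha> # xs @ \<beta> # ys"
    and lp: "short (last (\<beta> # ys)) = p" and lq: "short (last (\<alpha> # xs)) = q"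
    using constr[OF csR dR R(2) _ q(2)] q(1) C_def by blast
  define X where "X = xs @ [New \<alpha> \<beta>]"
  define Y where "Y = ys @ [New \<beta> \<alpha>]"
  note si = step_info[OF inv rot]
  have mn: "min (short (last (\<beta> # ys))) (short (last (\<alpha> # xs))) = p"
    "max (short (last (\<beta> # ys))) (short (last (\<alpha> # xs))) = q" using lp lq q(2) by auto
  have XY: "(labs X = {z\<in>C. p<z \<and> z\<le>q} \<and> labs Y = {z\<in>C. \<not>(p<z \<and> z\<le>q)}) \<or>
     (labs Y = {z\<in>C. p<z \<and> z\<le>q} \<and> labs X = {z\<in>C. \<not>(p<z \<and> z\<le>q)})"
    using si unfolding mn C_def X_def Y_def by blast
  have inv2: "Inv (S1 @ X # Y # S2)" using si unfolding X_def Y_def by blast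
  have ab: "\<alpha> \<noteq> \<beta>" using si by auto
  have NA: "{#z \<in># N. p<z \<and> z\<le>q#} = {#z \<in># mset as. z \<in> {z\<in>C. p<z \<and> z\<le>q}#}"
    unfolding N_def by (rule filt_AB) simp
  have NB: "{#z \<in># N. \<not>(p<z \<and> z\<le>q)#} = {#z \<in># mset as. z \<in> {z\<in>C. \<not>(p<z \<and> z\<le>q)}#}"
    unfolding N_def by (rule filt_AB) simp
  have G2: "Good (S1 @ X # Y # S2) as"
    unfolding Good_def
  proof (intro conjI ballI)
    fix R0 assume R0: "R0 \<in> set (S1 @ X # Y # S2)"
    show "pk (labs R0) {#z \<in># mset as. z \<in> labs R0#}"
    proof (cases "R0 = X \<or> R0 = Y")
      case True
      have "pk (labs X) {#z \<in># mset as. z \<in> labs X#} \<and> pk (labs Y) {#z \<in># mset as. z \<in> labs Y#}"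
        by (rule pkXY2[OF XY, where F = "\<lambda>L. {#z \<in># mset as. z \<in> L#}", OF pA[unfolded NA] pB[unfolded NB]])
      then show ?thesis using True by blast
    next
      case False
      then have R0S: "R0 \<in> set S1 \<union> set S2" using R0 by auto
      then have "labs R0 \<inter> C = {}" using labs_disj[OF inv] C_def by blast
      then have "p \<notin> labs R0" using R(2) C_def by auto
      moreover have "pk (labs R0) {#z \<in># mset (p # as). z \<in> labs R0#}"
        using Cons.prems(2) R0S S unfolding Good_def by auto
      ultimately show ?thesis by simp
    qed
  next
    fix z assume z: "z \<in> set as"
    then obtain R0 where R0: "R0 \<in> set S" "z \<in> labs R0" using Cons.prems(2) unfolding Good_def by auto
    show "\<exists>R0\<in>set (S1 @ X # Y # S2). z \<in> labs R0"
    proof (cases "z \<in> C")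
      case True
      then have "z \<in> labs X \<or> z \<in> labs Y" using XY by auto
      then show ?thesis by auto
    next
      case False
      then have "R0 \<noteq> R" using R0 C_def by auto
      then have "R0 \<in> set S1 \<union> set S2" using R0 S by auto
      then show ?thesis using R0 by auto
    qed
  qed
  obtain ms where "play (S1 @ X # Y # S2) ms as" using Cons.IH[OF inv2 G2] by blast
  then have "play S ({\<alpha>, \<beta>} # ms) (min (short (last (\<beta> # ys))) (short (last (\<alpha> # xs))) # as)"
    using play.step[OF S rot ab] unfolding X_def Y_def by blast
  then show ?case using mn by auto
qed




definition sim :: "arm list list \<Rightarrow> arm list list \<Rightarrow> bool" where
  "sim S S' \<longleftrightarrow> set (map labs S) = set (map labs S') \<and>
     (\<forall>x\<in>set (concat S). \<forall>x'\<in>set (concat S'). short x = short x' \<longrightarrow> x = x')"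

lemma labs_ne_other:
  assumes "Inv (S1 @ R # S2)"
  shows "labs R \<notin> set (map labs S1) \<union> set (map labs S2)"
proof
  assume "labs R \<in> set (map labs S1) \<union> set (map labs S2)"
  then obtain R0 where R0: "R0 \<in> set S1 \<union> set S2" "labs R0 = labs R" by auto
  have "labs R0 \<inter> labs R = {}" by (rule labs_disj[OF assms R0(1)])
  moreover have "R \<noteq> []" using assms unfolding Inv_def by auto
  then have "labs R \<noteq> {}" unfolding labs_def by simp
  ultimately show False using R0(2) by simp
qed

lemma same_region:
  assumes "Inv S" "R1 \<in> set S" "R2 \<in> set S" "x \<in> labs R1" "x \<in> labs R2"
  shows "labs R1 = labs R2"
proof -
  obtain S1 S2 where S: "S = S1 @ R2 # S2" using assms(3) by (metis split_list)
  show ?thesis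
  proof (cases "R1 = R2")
    case True then show ?thesis by simp
  next
    case False
    then have "R1 \<in> set S1 \<union> set S2" using assms(2) S by auto
    then have "labs R1 \<inter> labs R2 = {}" using labs_disj assms(1) S by blast
    then show ?thesis using assms(4,5) by auto
  qed
qed

lemma inj_play:
  "play S ms as \<Longrightarrow> Inv S \<Longrightarrow> Inv S' \<Longrightarrow> sim S S' \<Longrightarrow> play S' ms' as \<Longrightarrow> ms = ms'"
proof (induction arbitrary: S' ms' rule: play.induct)
  case (stop S)
  from stop.prems(4) show ?case by cases auto
next
  case (step S S1 R S2 k \<alpha> xs \<beta> ys ms as)
  define P where "P = min (short (last (\<beta> # ys))) (short (last (\<alpha> # xs)))"
  define Q where "Q = max (short (last (\<beta> # ys))) (short (last (\<alpha> # xs)))"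
  define X where "X = xs @ [New \<alpha> \<beta>]"
  define Y where "Y = ys @ [New \<beta> \<alpha>]"
  define C where "C = labs R"
  have inv: "Inv (S1 @ R # S2)" using step by simp
  note si = step_info[OF inv step.hyps(2)]
  have PQ: "P < Q" "P \<in> C" "Q \<in> C" using si unfolding P_def Q_def C_def by auto
  have XY: "(labs X = {z\<in>C. P<z \<and> z\<le>Q} \<and> labs Y = {z\<in>C. \<not>(P<z \<and> z\<le>Q)}) \<or>
     (labs Y = {z\<in>C. P<z \<and> z\<le>Q} \<and> labs X = {z\<in>C. \<not>(P<z \<and> z\<le>Q)})"
    using si unfolding P_def Q_def C_def X_def Y_def by blast
  have inv2: "Inv (S1 @ X # Y # S2)" using si unfolding X_def Y_def by blast
  have hds: "{short \<alpha>, short \<beta>} = {nxt C P, nxt C Q}" using si unfolding P_def Q_def C_def by blast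
  have sab: "short \<alpha> \<noteq> short \<beta>" using si by blast
  define O1 where "O1 = set (concat S1) \<union> set xs \<union> set ys \<union> set (concat S2)"
  have fr: "short \<alpha> \<notin> short ` O1" "short \<beta> \<notin> short ` O1" using si unfolding O1_def by blast+
  have setR: "set xs \<union> set ys \<union> {\<alpha>, \<beta>} = set R" using si by blast
  have G: "Good (S1 @ X # Y # S2) as" using sound[OF step.hyps(4)] inv2 X_def Y_def by simp
  from step.prems(4) obtain S1' R' S2' k' \<alpha>' xs' \<beta>' ys' ms0' where
    S': "S' = S1' @ R' # S2'" and rot': "rotate k' R' = \<alpha>' # xs' @ \<beta>' # ys'" and ab': "\<alpha>' \<noteq> \<beta>'"
    and pl': "play (S1' @ (xs' @ [New \<alpha>' \<beta>']) # (ys' @ [New \<beta>' \<alpha>']) # S2') ms0' as"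
    and ms': "ms' = {\<alpha>', \<beta>'} # ms0'"
    and hd': "min (short (last (\<beta>' # ys'))) (short (last (\<alpha>' # xs'))) = P"
    unfolding P_def by cases auto
  define Q' where "Q' = max (short (last (\<beta>' # ys'))) (short (last (\<alpha>' # xs')))"
  define X' where "X' = xs' @ [New \<alpha>' \<beta>']"
  define Y' where "Y' = ys' @ [New \<beta>' \<alpha>']"
  have inv': "Inv (S1' @ R' # S2')" using step.prems(2) S' by simp
  note si' = step_info[OF inv' rot']
  have PQ': "P < Q'" "P \<in> labs R'" "Q' \<in> labs R'" using si' hd' unfolding Q'_def by auto
  have inv2': "Inv (S1' @ X' # Y' # S2')" using si' unfolding X'_def Y'_def by blast
  have G': "Good (S1' @ X' # Y' # S2') as" using sound pl' inv2' X'_def Y'_def by simp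
  have "C \<in> set (map labs S')" using step.prems(3) step.hyps(1) C_def unfolding sim_def by auto
  then obtain R'' where R'': "R'' \<in> set S'" "labs R'' = C" by auto
  have CR': "labs R' = C"
    using same_region[OF step.prems(2) R''(1), of R' P] R'' PQ(2) PQ'(2) S' by auto
  have XY0: "(labs X' = {z\<in>labs R'. min (short (last (\<beta>' # ys'))) (short (last (\<alpha>' # xs')))<z \<and> z\<le>Q'} \<and> labs Y' = {z\<in>labs R'. \<not>(min (short (last (\<beta>' # ys'))) (short (last (\<alpha>' # xs')))<z \<and> z\<le>Q')}) \<or>
     (labs Y' = {z\<in>labs R'. min (short (last (\<beta>' # ys'))) (short (last (\<alpha>' # xs')))<z \<and> z\<le>Q'} \<and> labs X' = {z\<in>labs R'. \<not>(min (short (last (\<beta>' # ys'))) (short (last (\<alpha>' # xs')))<z \<and> z\<le>Q')})"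
    using si' unfolding Q'_def X'_def Y'_def by blast
  have XY': "(labs X' = {z\<in>C. P<z \<and> z\<le>Q'} \<and> labs Y' = {z\<in>C. \<not>(P<z \<and> z\<le>Q')}) \<or>
     (labs Y' = {z\<in>C. P<z \<and> z\<le>Q'} \<and> labs X' = {z\<in>C. \<not>(P<z \<and> z\<le>Q')})"
    using XY0 unfolding hd' CR' .
  define N where "N = {#z \<in># mset as. z \<in> C#}"
  have NA: "{#z \<in># N. P<z \<and> z\<le>Q#} = {#z \<in># mset as. z \<in> {z\<in>C. P<z \<and> z\<le>Q}#}"
    unfolding N_def by (rule filt_AB) simp
  have NA': "{#z \<in># N. P<z \<and> z\<le>Q'#} = {#z \<in># mset as. z \<in> {z\<in>C. P<z \<and> z\<le>Q'}#}"
    unfolding N_def by (rule filt_AB) simp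
  have "pk {z\<in>C. P<z \<and> z\<le>Q} ((\<lambda>L. {#z \<in># mset as. z \<in> L#}) {z\<in>C. P<z \<and> z\<le>Q}) \<and>
        pk {z\<in>C. \<not>(P<z \<and> z\<le>Q)} ((\<lambda>L. {#z \<in># mset as. z \<in> L#}) {z\<in>C. \<not>(P<z \<and> z\<le>Q)})"
    by (rule pkXY[OF XY]) (use G in \<open>auto simp: Good_def\<close>)
  then have pA: "pk {z\<in>C. P<z \<and> z\<le>Q} {#z \<in># N. P<z \<and> z\<le>Q#}" unfolding NA by simp
  have "pk {z\<in>C. P<z \<and> z\<le>Q'} ((\<lambda>L. {#z \<in># mset as. z \<in> L#}) {z\<in>C. P<z \<and> z\<le>Q'}) \<and>
        pk {z\<in>C. \<not>(P<z \<and> z\<le>Q')} ((\<lambda>L. {#z \<in># mset as. z \<in> L#}) {z\<in>C. \<not>(P<z \<and> z\<le>Q')})"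
    by (rule pkXY[OF XY']) (use G' in \<open>auto simp: Good_def\<close>)
  then have pA': "pk {z\<in>C. P<z \<and> z\<le>Q'} {#z \<in># N. P<z \<and> z\<le>Q'#}" unfolding NA' by simp
  have finC: "finite C" unfolding C_def labs_def by simp
  have QQ: "Q = Q'" by (rule uniq_core[OF finC PQ(3) _ PQ(1) PQ'(1) pA pA']) (use PQ' CR' in simp)
  have hds0: "{short \<alpha>', short \<beta>'} = {nxt (labs R') (min (short (last (\<beta>' # ys'))) (short (last (\<alpha>' # xs')))), nxt (labs R') Q'}"
    using si' unfolding Q'_def by blast
  have hds': "{short \<alpha>', short \<beta>'} = {nxt C P, nxt C Q}" using hds0 unfolding hd' CR' QQ .
  have sab': "short \<alpha>' \<noteq> short \<beta>'" using si' by blast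
  define O1' where "O1' = set (concat S1') \<union> set xs' \<union> set ys' \<union> set (concat S2')"
  have fr': "short \<alpha>' \<notin> short ` O1'" "short \<beta>' \<notin> short ` O1'" using si' unfolding O1'_def by blast+
  have setR': "set xs' \<union> set ys' \<union> {\<alpha>', \<beta>'} = set R'" using si' by blast
  have armeq: "x = x'" if "x \<in> set (concat S)" "x' \<in> set (concat S')" "short x = short x'" for x x'
    using step.prems(3) that unfolding sim_def by blast
  have inS: "\<alpha> \<in> set (concat S)" "\<beta> \<in> set (concat S)" using setR step.hyps(1) by auto
  have inS': "\<alpha>' \<in> set (concat S')" "\<beta>' \<in> set (concat S')" using setR' S' by auto
  have lab_eq: "{short \<alpha>', short \<beta>'} = {short \<alpha>, short \<beta>}" using hds hds' by simp
  have a'mem: "\<alpha>' = \<alpha> \<or> \<alpha>' = \<beta>"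
  proof -
    have "short \<alpha>' = short \<alpha> \<or> short \<alpha>' = short \<beta>" using lab_eq by (auto simp: doubleton_eq_iff)
    then show ?thesis using armeq inS inS' by metis
  qed
  have b'mem: "\<beta>' = \<alpha> \<or> \<beta>' = \<beta>"
  proof -
    have "short \<beta>' = short \<alpha> \<or> short \<beta>' = short \<beta>" using lab_eq by (auto simp: doubleton_eq_iff)
    then show ?thesis using armeq inS inS' by metis
  qed
  have pair: "(\<alpha>' = \<alpha> \<and> \<beta>' = \<beta>) \<or> (\<alpha>' = \<beta> \<and> \<beta>' = \<alpha>)" using a'mem b'mem ab' by blast
  then have mseq: "{\<alpha>', \<beta>'} = {\<alpha>, \<beta>}" by auto
  have simN: "sim (S1 @ X # Y # S2) (S1' @ X' # Y' # S2')"
    unfolding sim_def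
  proof (intro conjI ballI impI)
    have l1: "set (map labs S) = set (map labs S1) \<union> {C} \<union> set (map labs S2)" using step.hyps(1) C_def by auto
    have l2: "set (map labs S') = set (map labs S1') \<union> {C} \<union> set (map labs S2')" using S' CR' by auto
    have n1: "C \<notin> set (map labs S1) \<union> set (map labs S2)" using labs_ne_other[OF inv] C_def by simp
    have n2: "C \<notin> set (map labs S1') \<union> set (map labs S2')" using labs_ne_other[OF inv'] CR' by simp
    have "set (map labs S) = set (map labs S')" using step.prems(3) unfolding sim_def by blast
    then have rest: "set (map labs S1) \<union> set (map labs S2) = set (map labs S1') \<union> set (map labs S2')"
      using l1 l2 n1 n2 by blast
    have "{labs X, labs Y} = {labs X', labs Y'}" using XY XY' QQ by auto
    then show "set (map labs (S1 @ X # Y # S2)) = set (map labs (S1' @ X' # Y' # S2'))"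
      using rest by auto
  next
    fix x x' assume x: "x \<in> set (concat (S1 @ X # Y # S2))" and x': "x' \<in> set (concat (S1' @ X' # Y' # S2'))"
      and sx: "short x = short x'"
    have xc: "x \<in> O1 \<or> x = New \<alpha> \<beta> \<or> x = New \<beta> \<alpha>" using x unfolding O1_def X_def Y_def by auto
    have xc': "x' \<in> O1' \<or> x' = New \<alpha>' \<beta>' \<or> x' = New \<beta>' \<alpha>'" using x' unfolding O1'_def X'_def Y'_def by auto
    have O1S: "O1 \<subseteq> set (concat S)" unfolding O1_def using setR step.hyps(1) by auto
    have O1S': "O1' \<subseteq> set (concat S')" unfolding O1'_def using setR' S' by auto
    have shorts: "short ` {\<alpha>', \<beta>'} = {short \<alpha>, short \<beta>}" using mseq by simp
    show "x = x'"
    proof (cases "x \<in> O1")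
      case True
      show ?thesis
      proof (cases "x' \<in> O1'")
        case True2: True
        have "x \<in> set (concat S)" using True O1S by blast
        moreover have "x' \<in> set (concat S')" using True2 O1S' by blast
        ultimately show ?thesis by (rule armeq[OF _ _ sx])
      next
        case False
        then have "x' = New \<alpha>' \<beta>' \<or> x' = New \<beta>' \<alpha>'" using xc' by blast
        then have "short x' = short \<alpha>' \<or> short x' = short \<beta>'" by auto
        then have "short x' \<in> {short \<alpha>', short \<beta>'}" by blast
        then have "short x' \<in> {short \<alpha>, short \<beta>}" unfolding lab_eq .
        then have "short x = short \<alpha> \<or> short x = short \<beta>" using sx by simp
        moreover have "short x \<in> short ` O1" using True by blast
        ultimately show ?thesis using fr by metis
      qed
    next
      case False
      then have xn: "x = New \<alpha> \<beta> \<or> x = New \<beta> \<alpha>" using xc by blast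
      then have "short x = short \<alpha> \<or> short x = short \<beta>" by auto
      then have sxab: "short x \<in> {short \<alpha>, short \<beta>}" by blast
      show ?thesis
      proof (cases "x' \<in> O1'")
        case True
        have "short x' \<in> {short \<alpha>, short \<beta>}" using sxab sx by simp
        then have "short x' \<in> {short \<alpha>', short \<beta>'}" unfolding lab_eq .
        then have "short x' = short \<alpha>' \<or> short x' = short \<beta>'" by blast
        moreover have "short x' \<in> short ` O1'" using True by blast
        ultimately show ?thesis using fr' by metis
      next
        case False2: False
        then have x'n: "x' = New \<alpha>' \<beta>' \<or> x' = New \<beta>' \<alpha>'" using xc' by blast
        from pair show ?thesis
        proof
          assume h: "\<alpha>' = \<alpha> \<and> \<beta>' = \<beta>"
          show ?thesis using xn x'n h sx sab by auto
        next
          assume h: "\<alpha>' = \<beta> \<and> \<beta>' = \<alpha>"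
          show ?thesis using xn x'n h sx sab by auto
        qed
      qed
    qed
  qed
  have "ms = ms0'" using step.IH[OF inv2[unfolded X_def Y_def] _ _ pl'] step.prems inv2' simN
    unfolding X_def Y_def X'_def Y'_def by blast
  then show ?case using ms' mseq by simp
qed




lemma len_filter_take: "length (filter P (take k xs)) \<le> length (filter P xs)"
proof -
  have "filter P xs = filter P (take k xs) @ filter P (drop k xs)"
    by (metis append_take_drop_id filter_append)
  then show ?thesis by (metis le_add1 length_append)
qed

lemma cle_sort: "cle (mset as) x = length (filter (\<lambda>z. z \<le> x) (sort as))"
proof -
  have "mset (filter (\<lambda>z. z \<le> x) (sort as)) = {#z \<in># mset as. z \<le> x#}" by simp
  then have "size {#z \<in># mset as. z \<le> x#} = length (filter (\<lambda>z. z \<le> x) (sort as))"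
    by (metis size_mset)
  then show ?thesis unfolding cle_def .
qed

lemma rk_int: "x \<le> n \<Longrightarrow> rk {1..n} x = x"
proof -
  assume "x \<le> n"
  then have "{z\<in>{1..n}. z \<le> x} = {1..x}" by auto
  then show ?thesis unfolding rk_def by simp
qed

lemma pk_pf:
  fixes n :: nat
  assumes n: "n \<ge> 2"
  shows "(pk {1..n} (mset as) \<and> set as \<subseteq> {1..n}) \<longleftrightarrow> parking_function (n - 1) as"
proof
  assume h: "pk {1..n} (mset as) \<and> set as \<subseteq> {1..n}"
  have Mx: "Max {1..n} = n" using n by (intro Max_eqI) auto
  have "size (mset as) + 1 = card {1..n}" using h unfolding pk_def by blast
  then have len: "length as = n - 1" by simp
  have pre: "\<forall>x<n. rk {1..n} x \<le> cle (mset as) x" using h Mx unfolding pk_def by simp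
  have sub: "set as \<subseteq> {1..n-1}"
  proof
    fix z assume z: "z \<in> set as"
    then have "z < Max {1..n}" using pk_lt_Max[of "{1..n}" "mset as" z] h by simp
    then show "z \<in> {1..n-1}" using z h Mx by auto
  qed
  define s where "s = sort as"
  have ss: "sorted s" and ls: "length s = n - 1" unfolding s_def using len by auto
  have "s ! i \<le> i + 1" if i: "i < n - 1" for i
  proof (rule ccontr)
    assume "\<not> s ! i \<le> i + 1"
    then have big: "i + 1 < s ! i" by simp
    have "rk {1..n} (i+1) \<le> cle (mset as) (i+1)" using pre i by simp
    then have A: "i + 1 \<le> length (filter (\<lambda>z. z \<le> i+1) s)" using rk_int[of "i+1" n] i cle_sort s_def by simp
    have "filter (\<lambda>z. z \<le> i+1) (drop i s) = []"
    proof -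
      have "\<forall>y\<in>set (drop i s). \<not> y \<le> i + 1"
      proof
        fix y assume "y \<in> set (drop i s)"
        then obtain j where j: "j < length (drop i s)" "y = drop i s ! j" by (metis in_set_conv_nth)
        then have "y = s ! (i + j)" "i + j < length s" using i ls by auto
        moreover have "s ! i \<le> s ! (i + j)" using sorted_nth_mono[OF ss, of i "i+j"] calculation by simp
        ultimately show "\<not> y \<le> i + 1" using big by simp
      qed
      then show ?thesis by (simp add: filter_empty_conv)
    qed
    moreover have "filter (\<lambda>z. z \<le> i+1) s = filter (\<lambda>z. z \<le> i+1) (take i s) @ filter (\<lambda>z. z \<le> i+1) (drop i s)"
      by (metis append_take_drop_id filter_append)
    ultimately have "length (filter (\<lambda>z. z \<le> i+1) s) \<le> length (take i s)"
      by (metis append_Nil2 length_filter_le)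
    also have "\<dots> \<le> i" by simp
    finally show False using A by simp
  qed
  then show "parking_function (n - 1) as" unfolding parking_function_def s_def using len sub by auto
next
  assume pf: "parking_function (n - 1) as"
  have len: "length as = n - 1" and sub: "set as \<subseteq> {1..n-1}" and ps: "\<forall>i<n-1. sort as ! i \<le> i + 1"
    using pf unfolding parking_function_def by auto
  have Mx: "Max {1..n} = n" using n by (intro Max_eqI) auto
  define s where "s = sort as"
  have ls: "length s = n - 1" unfolding s_def using len by simp
  have "rk {1..n} x \<le> cle (mset as) x" if x: "x < n" for x
  proof -
    have "take x s = filter (\<lambda>z. z \<le> x) (take x s)"
    proof (rule sym, rule filter_True, rule ballI)
      fix y assume "y \<in> set (take x s)"
      then obtain j where j: "j < length (take x s)" "y = take x s ! j" by (metis in_set_conv_nth)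
      then have "j < x" "j < n - 1" "y = s ! j" using ls by auto
      then show "y \<le> x" using ps s_def by fastforce
    qed
    moreover have "length (take x s) = x" using ls x by simp
    ultimately have "x \<le> length (filter (\<lambda>z. z \<le> x) s)" using len_filter_take[of "\<lambda>z. z \<le> x" x s] by simp
    then show ?thesis using rk_int[of x n] x cle_sort s_def by simp
  qed
  then have "\<forall>x<Max {1..n}. rk {1..n} x \<le> cle (mset as) x" using Mx by simp
  moreover have "size (mset as) + 1 = card {1..n}" using len n by simp
  moreover have "{1..n-1} \<subseteq> {1..n::nat}" by auto
  then have "set as \<subseteq> {1..n}" using sub by blast
  ultimately show "pk {1..n} (mset as) \<and> set as \<subseteq> {1..n}" unfolding pk_def using n by auto
qed

lemma map_short_orig: "map short (map Orig l) = l"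
  by (induction l) auto

lemma inv_init:
  assumes "n \<ge> 2" shows "Inv (init_pos n)"
proof -
  have m: "map short (map Orig [1..<n+1]) = [1..<n+1]" by (rule map_short_orig)
  have c: "cs [1..<n+1]" unfolding cs_def
    by (rule exI[of _ "[1..<n+1]"], rule exI[of _ 0]) (intro conjI sorted_wrt_upt; simp)
  have ne: "map Orig [1..<n+1] \<noteq> []" using assms by simp
  have d: "distinct [1..<n+1]" by (rule distinct_upt)
  show ?thesis unfolding Inv_def init_pos_def using m c ne d by (simp only: concat.simps append_Nil2 list.set
     ball_simps insert_iff empty_iff) simp
qed

lemma good_init:
  assumes "n \<ge> 2"
  shows "Good (init_pos n) as \<longleftrightarrow> pk {1..n} (mset as) \<and> set as \<subseteq> {1..n}"
proof -
  have L: "labs (map Orig [1..<n+1]) = {1..n}" unfolding labs_def map_short_orig by auto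
  have gs: "Good [R] as \<longleftrightarrow> pk (labs R) {#z\<in>#mset as. z \<in> labs R#} \<and> set as \<subseteq> labs R" for R
    unfolding Good_def by auto
  have "Good (init_pos n) as \<longleftrightarrow> pk {1..n} {#z \<in># mset as. z \<in> {1..n}#} \<and> set as \<subseteq> {1..n}"
    unfolding init_pos_def gs L ..
  moreover have "set as \<subseteq> {1..n} \<Longrightarrow> {#z \<in># mset as. z \<in> {1..n}#} = mset as"
    by (rule filter_all) auto
  ultimately show ?thesis by metis
qed


lemma sim_refl:
  assumes "Inv S" shows "sim S S"
proof -
  have "distinct (map short (concat S))" using assms unfolding Inv_def by blast
  then have "inj_on short (set (concat S))" by (simp add: distinct_map)
  then show ?thesis unfolding sim_def inj_on_def by blast
qed

theorem theorem4:
  fixes n :: nat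
  assumes "n \<ge> 2"
  shows "(\<forall>ms ms' as. play (init_pos n) ms as \<and> play (init_pos n) ms' as \<longrightarrow> ms = ms')
       \<and> {as. \<exists>ms. play (init_pos n) ms as} = {a. parking_function (n - 1) a}"
proof -
  have inv: "Inv (init_pos n)" by (rule inv_init[OF assms])
  have simr: "sim (init_pos n) (init_pos n)" by (rule sim_refl[OF inv])
  have p1: "\<forall>ms ms' as. play (init_pos n) ms as \<and> play (init_pos n) ms' as \<longrightarrow> ms = ms'"
    using inj_play inv simr by blast
  have p2: "{as. \<exists>ms. play (init_pos n) ms as} = {a. parking_function (n - 1) a}"
  proof (intro set_eqI iffI)
    fix as assume "as \<in> {as. \<exists>ms. play (init_pos n) ms as}"
    then obtain ms where "play (init_pos n) ms as" by blast
    then have "Good (init_pos n) as" using sound inv by blast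
    then have "pk {1..n} (mset as) \<and> set as \<subseteq> {1..n}" using good_init[OF assms] by blast
    then show "as \<in> {a. parking_function (n - 1) a}" using pk_pf[OF assms] by blast
  next
    fix as assume "as \<in> {a. parking_function (n - 1) a}"
    then have "pk {1..n} (mset as) \<and> set as \<subseteq> {1..n}" using pk_pf[OF assms] by blast
    then have "Good (init_pos n) as" using good_init[OF assms] by blast
    then show "as \<in> {as. \<exists>ms. play (init_pos n) ms as}" using complete inv by blast
  qed
  show ?thesis using p1 p2 by blast
qed

end
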